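(* Let $\sigma\ge0$, $\delta\ge0$, $\underline\gamma>0$, and let sequences $\{\gamma_j\}_{j\ge1}$, $\{\eta_j\}_{j\ge1}$, $\{\alpha_j\}_{j\ge0}$ of reals satisfy, for every $j\ge1$, $\gamma_j\ge\underline\gamma$ and $\gamma_j\eta_j\le\alpha_{j-1}-(1+\sigma)\alpha_j+\gamma_j\delta$. Then: (a) for every $k\ge1$, $\displaystyle\min_{1\le j\le k}\eta_j\le\frac{\alpha_0-(1+\sigma)^k\alpha_k}{\sum_{j=1}^k(1+\sigma)^{j-1}\gamma_j}+\delta$; (b) if $\alpha_j\ge0$ for all $j$, then $\min_{1\le j\le k}\eta_j\le2\delta$ for every $k\ge1$ such that \[ k\ge\min\left\{\frac{1+\sigma}{\sigma}\log\left(\frac{\sigma\alpha_0}{\underline\gamma\delta}+1\right),\ \frac{\alpha_0}{\underline\gamma\delta}\right\}, \] with the convention that the first term equals the second when $\sigma=0$. *)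

theory Defs
  imports Complex_Main
begin

definition iter_bound :: "real \<Rightarrow> real \<Rightarrow> real \<Rightarrow> real \<Rightarrow> real" where
  "iter_bound \<sigma> a0 gl \<delta> =
     (let first = (if \<sigma> = 0 then a0 / (gl * \<delta>)
                   else (1 + \<sigma>) / \<sigma> * ln (\<sigma> * a0 / (gl * \<delta>) + 1))
      in min first (a0 / (gl * \<delta>)))"

end

theory Submission
  imports Defs
begin

lemma geo_sum:
  fixes \<sigma> :: real
  shows "\<sigma> * (\<Sum>j=1..k. (1 + \<sigma>) ^ (j - 1)) = (1 + \<sigma>) ^ k - 1"
  by (induction k) (auto simp: algebra_simps)

lemma geo_ge:
  fixes \<sigma> :: real
  assumes "\<sigma> \<ge> 0"
  shows "(\<Sum>j=1..k. (1 + \<sigma>) ^ (j - 1)) \<ge> real k"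
proof -
  have "(\<Sum>j=1..k. (1::real)) \<le> (\<Sum>j=1..k. (1 + \<sigma>) ^ (j - 1))"
    by (rule sum_mono) (simp add: assms one_le_power)
  then show ?thesis by simp
qed

lemma telesc:
  fixes \<sigma> \<delta> :: real and \<gamma> \<eta> \<alpha> :: "nat \<Rightarrow> real"
  assumes "\<sigma> \<ge> 0"
    and "\<And>j. j \<ge> 1 \<Longrightarrow> \<gamma> j * \<eta> j \<le> \<alpha> (j - 1) - (1 + \<sigma>) * \<alpha> j + \<gamma> j * \<delta>"
  shows "(\<Sum>j=1..k. (1 + \<sigma>) ^ (j - 1) * \<gamma> j * (\<eta> j - \<delta>)) \<le> \<alpha> 0 - (1 + \<sigma>) ^ k * \<alpha> k"
proof (induction k)
  case 0
  then show ?case by simp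
next
  case (Suc k)
  have h: "\<gamma> (Suc k) * (\<eta> (Suc k) - \<delta>) \<le> \<alpha> k - (1 + \<sigma>) * \<alpha> (Suc k)"
    using assms(2)[of "Suc k"] by (simp add: algebra_simps)
  have "(1 + \<sigma>) ^ k * (\<gamma> (Suc k) * (\<eta> (Suc k) - \<delta>)) \<le> (1 + \<sigma>) ^ k * (\<alpha> k - (1 + \<sigma>) * \<alpha> (Suc k))"
    by (rule mult_left_mono[OF h]) (simp add: assms)
  then show ?case using Suc by (simp add: algebra_simps)
qed

theorem lemmaA2:
  fixes \<sigma> \<delta> gl :: real and \<gamma> \<eta> \<alpha> :: "nat \<Rightarrow> real"
  assumes "\<sigma> \<ge> 0" and "\<delta> \<ge> 0" and "gl > 0"
    and "\<And>j. j \<ge> 1 \<Longrightarrow> \<gamma> j \<ge> gl"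
    and "\<And>j. j \<ge> 1 \<Longrightarrow> \<gamma> j * \<eta> j \<le> \<alpha> (j - 1) - (1 + \<sigma>) * \<alpha> j + \<gamma> j * \<delta>"
  shows "(\<forall>k\<ge>1. Min (\<eta> ` {1..k}) \<le>
            (\<alpha> 0 - (1 + \<sigma>) ^ k * \<alpha> k) / (\<Sum>j=1..k. (1 + \<sigma>) ^ (j - 1) * \<gamma> j) + \<delta>)
       \<and> ((\<forall>j. \<alpha> j \<ge> 0) \<longrightarrow>
            (\<forall>k\<ge>1. \<delta> > 0 \<longrightarrow> real k \<ge> iter_bound \<sigma> (\<alpha> 0) gl \<delta> \<longrightarrow>
               Min (\<eta> ` {1..k}) \<le> 2 * \<delta>))"
proof -
  define S where "S k = (\<Sum>j=1..k. (1 + \<sigma>) ^ (j - 1) * \<gamma> j)" for k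
  have Sge: "S k \<ge> gl * (\<Sum>j=1..k. (1 + \<sigma>) ^ (j - 1))" for k
    unfolding S_def sum_distrib_left
    by (rule sum_mono) (use assms in \<open>auto simp: mult.commute intro!: mult_left_mono\<close>)
  have Spos: "S k > 0" if "k \<ge> 1" for k
  proof -
    have "0 < gl * real k" using assms(3) that by simp
    also have "\<dots> \<le> gl * (\<Sum>j=1..k. (1 + \<sigma>) ^ (j - 1))"
      using geo_ge[OF assms(1)] assms(3) by simp
    finally show ?thesis using Sge[of k] by linarith
  qed
  have A: "Min (\<eta> ` {1..k}) \<le> (\<alpha> 0 - (1 + \<sigma>) ^ k * \<alpha> k) / S k + \<delta>" if "k \<ge> 1" for k
  proof -
    let ?m = "Min (\<eta> ` {1..k})"
    have "(\<Sum>j=1..k. (1 + \<sigma>) ^ (j - 1) * \<gamma> j * (?m - \<delta>))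
        \<le> (\<Sum>j=1..k. (1 + \<sigma>) ^ (j - 1) * \<gamma> j * (\<eta> j - \<delta>))"
    proof (rule sum_mono)
      fix j assume j: "j \<in> {1..k}"
      have "?m \<le> \<eta> j" using j by (intro Min_le) auto
      moreover have "(1 + \<sigma>) ^ (j - 1) * \<gamma> j \<ge> 0"
        using assms(1,3) assms(4)[of j] j by simp
      ultimately show "(1 + \<sigma>) ^ (j - 1) * \<gamma> j * (?m - \<delta>) \<le> (1 + \<sigma>) ^ (j - 1) * \<gamma> j * (\<eta> j - \<delta>)"
        by (intro mult_left_mono) auto
    qed
    also have "\<dots> \<le> \<alpha> 0 - (1 + \<sigma>) ^ k * \<alpha> k" using telesc[of \<sigma> \<gamma> \<eta> \<alpha> \<delta> k] assms(1,5) by blast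
    finally have "S k * (?m - \<delta>) \<le> \<alpha> 0 - (1 + \<sigma>) ^ k * \<alpha> k"
      unfolding S_def by (simp add: sum_distrib_right)
    then have "?m - \<delta> \<le> (\<alpha> 0 - (1 + \<sigma>) ^ k * \<alpha> k) / S k"
      using Spos[OF that] by (simp add: field_simps mult.commute)
    then show ?thesis by simp
  qed
  have B: "Min (\<eta> ` {1..k}) \<le> 2 * \<delta>"
    if nn: "\<forall>j. \<alpha> j \<ge> 0" and k: "k \<ge> 1" and d: "\<delta> > 0"
      and kb: "real k \<ge> iter_bound \<sigma> (\<alpha> 0) gl \<delta>" for k
  proof -
    let ?G = "\<Sum>j=1..k. (1 + \<sigma>) ^ (j - 1)"
    let ?q = "\<alpha> 0 / (gl * \<delta>)"
    have gd: "gl * \<delta> > 0" using assms(3) d by simp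
    have q0: "?q \<ge> 0" using nn gd by simp
    have Gq: "?G \<ge> ?q"
    proof (cases "real k \<ge> ?q")
      case True
      then show ?thesis using geo_ge[OF assms(1), of k] by linarith
    next
      case False
      then have s: "\<sigma> > 0" and kf: "real k \<ge> (1 + \<sigma>) / \<sigma> * ln (\<sigma> * ?q + 1)"
        using kb assms(1) unfolding iter_bound_def Let_def
        by (auto split: if_splits simp: min_def mult.assoc)
      have "ln (1 / (1 + \<sigma>)) \<le> 1 / (1 + \<sigma>) - 1"
        by (rule ln_le_minus_one) (use s in simp)
      then have l1: "ln (1 + \<sigma>) \<ge> \<sigma> / (1 + \<sigma>)"
        using s by (simp add: ln_div field_simps)
      have "ln (\<sigma> * ?q + 1) \<le> real k * (\<sigma> / (1 + \<sigma>))"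
        using kf s by (simp add: field_simps)
      also have "\<dots> \<le> real k * ln (1 + \<sigma>)" using l1 by (intro mult_left_mono) auto
      also have "\<dots> = ln ((1 + \<sigma>) ^ k)" using s by (simp add: ln_realpow)
      finally have "\<sigma> * ?q + 1 \<le> (1 + \<sigma>) ^ k"
        using s q0 mult_nonneg_nonneg[of \<sigma> ?q] by (subst (asm) ln_le_cancel_iff) auto
      then have "\<sigma> * ?q \<le> \<sigma> * ?G" using geo_sum[of \<sigma> k] by linarith
      then show ?thesis using s by (metis mult_le_cancel_left_pos times_divide_eq_right)
    qed
    have "\<alpha> 0 \<le> gl * \<delta> * ?G" using Gq gd by (simp add: field_simps)
    also have "\<dots> \<le> \<delta> * S k" using Sge[of k] d by (simp add: mult.assoc mult.left_commute)
    finally have a0: "\<alpha> 0 / S k \<le> \<delta>" using Spos[OF k] by (simp add: field_simps)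
    have "(\<alpha> 0 - (1 + \<sigma>) ^ k * \<alpha> k) / S k \<le> \<alpha> 0 / S k"
      using Spos[OF k] nn assms(1) by (intro divide_right_mono) auto
    then show ?thesis using A[OF k] a0 by linarith
  qed
  show ?thesis using A B unfolding S_def by blast
qed

end
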